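(* Let $A$ be a Banach lattice algebra with identity and let $a\in A$. Then the ideal generated by $a$ (the intersection of all ideals of $A$ containing $a$) equals \[\{x\in A: |x|\le r|a|r'\ \text{for some } r,r'\in A_+\}.\]
   Context: A Banach lattice algebra is a real Banach lattice $A$ with an associative bilinear product making it a Banach algebra such that $xy\ge0$ whenever $x,y\ge0$; identity means a multiplicative identity of norm one. An ideal of $A$ is a linear subspace $I$ that is both an order ideal (if $|x|\le|y|$ and $y\in I$ then $x\in I$) and a two-sided algebraic ideal ($zx,xz\in I$ for all $z\in A$, $x\in I$). *)

theory Defs
  imports "HOL-Analysis.Analysis" "HOL-Library.Lattice_Algebras"
begin

class banach_lattice_algebra_1 =
  real_normed_algebra_1 + banach + ordered_real_vector + lattice_ab_group_add_abs +
  assumes norm_lattice_mono: "\<bar>x\<bar> \<le> \<bar>y\<bar> \<Longrightarrow> norm x \<le> norm y"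
    and mult_pos: "0 \<le> x \<Longrightarrow> 0 \<le> y \<Longrightarrow> 0 \<le> x * y"

definition bla_ideal :: "'a::banach_lattice_algebra_1 set \<Rightarrow> bool" where
  "bla_ideal I \<longleftrightarrow>
     0 \<in> I \<and>
     (\<forall>x\<in>I. \<forall>y\<in>I. x + y \<in> I) \<and>
     (\<forall>c::real. \<forall>x\<in>I. c *\<^sub>R x \<in> I) \<and>
     (\<forall>x y. \<bar>x\<bar> \<le> \<bar>y\<bar> \<and> y \<in> I \<longrightarrow> x \<in> I) \<and>
     (\<forall>z. \<forall>x\<in>I. z * x \<in> I \<and> x * z \<in> I)"

definition generated_ideal :: "'a::banach_lattice_algebra_1 \<Rightarrow> 'a set" where
  "generated_ideal a = \<Inter> {I. bla_ideal I \<and> a \<in> I}"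

end

theory Submission
  imports Defs
begin

subclass (in banach_lattice_algebra_1) lattice_ring
proof
  fix a b c :: 'a
  assume "a \<le> b" "0 \<le> c"
  then have "0 \<le> c * (b - a)" "0 \<le> (b - a) * c" by (simp_all add: mult_pos)
  then show "c * a \<le> c * b" "a * c \<le> b * c"
    by (simp_all add: right_diff_distrib left_diff_distrib)
qed

lemma abs_scaleR_le:
  fixes x :: "'a::banach_lattice_algebra_1"
  shows "\<bar>c *\<^sub>R x\<bar> \<le> \<bar>c\<bar> *\<^sub>R \<bar>x\<bar>"
proof (cases "c \<ge> 0")
  case True
  have "c *\<^sub>R x \<le> c *\<^sub>R \<bar>x\<bar>" by (rule scaleR_left_mono) (use True in \<open>auto simp: abs_ge_self\<close>)
  moreover have "- (c *\<^sub>R x) \<le> c *\<^sub>R \<bar>x\<bar>"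
    using scaleR_left_mono[of "-x" "\<bar>x\<bar>" c] True abs_ge_minus_self[of x] by auto
  ultimately show ?thesis using True by (simp add: abs_le_iff)
next
  case False
  have "c *\<^sub>R x = (-c) *\<^sub>R (-x)" by simp
  moreover have "(-c) *\<^sub>R (-x) \<le> (-c) *\<^sub>R \<bar>x\<bar>" by (rule scaleR_left_mono) (use False in \<open>auto simp: abs_ge_minus_self\<close>)
  moreover have "- ((-c) *\<^sub>R (-x)) \<le> (-c) *\<^sub>R \<bar>x\<bar>"
    using scaleR_left_mono[of "x" "\<bar>x\<bar>" "-c"] False abs_ge_self[of x] by auto
  ultimately show ?thesis using False by (simp add: abs_le_iff)
qed

theorem mainTheorem9:
  fixes a :: "'a::banach_lattice_algebra_1"
  shows "generated_ideal a =
           {x. \<exists>r r'. 0 \<le> r \<and> 0 \<le> r' \<and> \<bar>x\<bar> \<le> r * \<bar>a\<bar> * r'}"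
  (is "_ = ?S")
proof
  have aS: "a \<in> ?S"
  proof -
    have "\<bar>a\<bar> = \<bar>1 * a * 1\<bar>" by simp
    also have "\<dots> \<le> \<bar>1 * a\<bar> * \<bar>1\<bar>" by (rule abs_le_mult)
    also have "\<dots> \<le> \<bar>1\<bar> * \<bar>a\<bar> * \<bar>1\<bar>"
      by (rule mult_right_mono[OF abs_le_mult]) simp
    finally show ?thesis by (intro CollectI exI[of _ "\<bar>1\<bar>"] conjI) auto
  qed
  have idS: "bla_ideal ?S"
    unfolding bla_ideal_def
  proof (intro conjI ballI allI impI)
    show "0 \<in> ?S" by (auto intro!: exI[of _ 0])
  next
    fix x y assume "x \<in> ?S" "y \<in> ?S"
    then obtain r1 r1' r2 r2' where h: "0 \<le> r1" "0 \<le> r1'" "\<bar>x\<bar> \<le> r1 * \<bar>a\<bar> * r1'"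
      "0 \<le> r2" "0 \<le> r2'" "\<bar>y\<bar> \<le> r2 * \<bar>a\<bar> * r2'" by auto
    have "\<bar>x + y\<bar> \<le> \<bar>x\<bar> + \<bar>y\<bar>" by (rule abs_triangle_ineq)
    also have "\<dots> \<le> r1 * \<bar>a\<bar> * r1' + r2 * \<bar>a\<bar> * r2'" using h by (intro add_mono)
    also have "\<dots> \<le> (r1 + r2) * \<bar>a\<bar> * (r1' + r2')"
    proof -
      have "0 \<le> r1 * \<bar>a\<bar> * r2'" "0 \<le> r2 * \<bar>a\<bar> * r1'" using h by simp_all
      then show ?thesis by (simp add: algebra_simps)
    qed
    finally have "\<bar>x + y\<bar> \<le> (r1 + r2) * \<bar>a\<bar> * (r1' + r2')" .
    moreover have "0 \<le> r1 + r2" "0 \<le> r1' + r2'" using h by simp_all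
    ultimately show "x + y \<in> ?S" by blast
  next
    fix c :: real and x assume "x \<in> ?S"
    then obtain r r' where h: "0 \<le> r" "0 \<le> r'" "\<bar>x\<bar> \<le> r * \<bar>a\<bar> * r'" by auto
    have "\<bar>c *\<^sub>R x\<bar> \<le> \<bar>c\<bar> *\<^sub>R \<bar>x\<bar>" by (rule abs_scaleR_le)
    also have "\<dots> \<le> \<bar>c\<bar> *\<^sub>R (r * \<bar>a\<bar> * r')" using h by (intro scaleR_left_mono) auto
    also have "\<dots> = (\<bar>c\<bar> *\<^sub>R r) * \<bar>a\<bar> * r'" by simp
    finally have X: "\<bar>c *\<^sub>R x\<bar> \<le> (\<bar>c\<bar> *\<^sub>R r) * \<bar>a\<bar> * (r')" .
    have "0 \<le> \<bar>c\<bar> *\<^sub>R r" "0 \<le> r'" using h by (simp_all add: scaleR_nonneg_nonneg)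
    with X show "c *\<^sub>R x \<in> ?S" by blast
  next
    fix x y assume "\<bar>x\<bar> \<le> \<bar>y\<bar> \<and> y \<in> ?S"
    then show "x \<in> ?S" by (auto intro: order_trans)
  next
    fix z x assume "x \<in> ?S"
    then obtain r r' where h: "0 \<le> r" "0 \<le> r'" "\<bar>x\<bar> \<le> r * \<bar>a\<bar> * r'" by auto
    have "\<bar>z * x\<bar> \<le> \<bar>z\<bar> * \<bar>x\<bar>" by (rule abs_le_mult)
    also have "\<dots> \<le> \<bar>z\<bar> * (r * \<bar>a\<bar> * r')" using h by (intro mult_left_mono) auto
    also have "\<dots> = (\<bar>z\<bar> * r) * \<bar>a\<bar> * r'" by (simp add: mult.assoc)
    finally have X: "\<bar>z * x\<bar> \<le> (\<bar>z\<bar> * r) * \<bar>a\<bar> * (r')" .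
    have "0 \<le> \<bar>z\<bar> * r" "0 \<le> r'" using h by simp_all
    with X show "z * x \<in> ?S" by blast
    have "\<bar>x * z\<bar> \<le> \<bar>x\<bar> * \<bar>z\<bar>" by (rule abs_le_mult)
    also have "\<dots> \<le> (r * \<bar>a\<bar> * r') * \<bar>z\<bar>" using h by (intro mult_right_mono) auto
    also have "\<dots> = r * \<bar>a\<bar> * (r' * \<bar>z\<bar>)" by (simp add: mult.assoc)
    finally have X: "\<bar>x * z\<bar> \<le> (r) * \<bar>a\<bar> * (r' * \<bar>z\<bar>)" .
    have "0 \<le> r" "0 \<le> r' * \<bar>z\<bar>" using h by simp_all
    with X show "x * z \<in> ?S" by blast
  qed
  show "generated_ideal a \<subseteq> ?S"
    unfolding generated_ideal_def using aS idS by blast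
next
  show "?S \<subseteq> generated_ideal a"
    unfolding generated_ideal_def
  proof (intro subsetI InterI)
    fix x I assume "x \<in> ?S" "I \<in> {I. bla_ideal I \<and> a \<in> I}"
    then obtain r r' where h: "0 \<le> r" "0 \<le> r'" "\<bar>x\<bar> \<le> r * \<bar>a\<bar> * r'"
      and I: "bla_ideal I" "a \<in> I" by auto
    have "\<bar>a\<bar> \<in> I" using I unfolding bla_ideal_def by (metis abs_idempotent order_refl)
    then have "r * \<bar>a\<bar> * r' \<in> I" using I unfolding bla_ideal_def by blast
    moreover have "\<bar>x\<bar> \<le> \<bar>r * \<bar>a\<bar> * r'\<bar>" using h by simp
    ultimately show "x \<in> I" using I unfolding bla_ideal_def by blast
  qed
qed

end
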